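(* Let nonempty active action sets $A_{l,i}\subseteq\mathcal{A}$ be given, and let $\eta$ be the random exploration policy in which, independently for each state $(l,i)$, with probability $\frac{k}{2H}$ the action $e_{l,i}$ is drawn uniformly from $A_{l,i}$, and with probability $1-\frac{k}{2H}$ it is set to $e_{l,i}=\arg\max_{a\in A_{l,i}}p_i(l\mid l,a)$. Let $Q_{l,i}$ be the probability that $\eta$ visits state $(l,i)$. Then for any $i\in[H-1]$ and $l\in[k]$: $$Q_{s,i+1}\ \ge\ \max_{a\in A_{l,i}}\frac{k}{2HA}\,Q_{l,i}\,p_i(s\mid l,a)\qquad\text{for all } s<k,$$ and $$Q_{l,i+1}\ \ge\ \max_{a\in A_{l,i}}\Big(1-\frac{k}{2H}\Big)Q_{l,i}\,p_i(l\mid l,a)\ \ge\ \max_{a\in A_{l,i}}e^{-k/H}\,Q_{l,i}\,p_i(l\mid l,a).$$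
   Context: An episodic MDP has states $(l,i)$, $l\in[k]$, $i\in[H]$, with $k\le H$, a fixed start state in stage $1$, and an action set $\mathcal{A}$ of size $A$. For $i\in[H-1]$, action $a$ at state $(l,i)$ moves to state $(s,i+1)$ with probability $p_i(s\mid l,a)$, independently of everything else. (In the paper's setting the MDP is ordered: start state $(k,1)$, $p_i(s\mid l,a)=0$ for $s>l$, and the maximizer of $p_i(l\mid l,\cdot)$ over $A_{l,i}$ is identifiable from a known total order on actions.) A policy assigning an action to every state is executed by taking the assigned action at each visited state. *)

theory Defs
  imports "HOL-Probability.Probability"
begin

text \<open>States are pairs (l,i) with l in {1..k} (level) and i in {1..H} (stage).
  P i l a is the next-state distribution p_i(. | l, a) (over levels of stage i+1).\<close>

definition expl_action :: "real \<Rightarrow> 'a set \<Rightarrow> 'a \<Rightarrow> 'a pmf" where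
  "expl_action q As am = bernoulli_pmf q \<bind> (\<lambda>b. if b then pmf_of_set As else return_pmf am)"

definition expl_policy ::
  "nat \<Rightarrow> nat \<Rightarrow> (nat \<Rightarrow> nat \<Rightarrow> 'a set) \<Rightarrow> (nat \<Rightarrow> nat \<Rightarrow> 'a) \<Rightarrow> (nat \<times> nat \<Rightarrow> 'a) pmf" where
  "expl_policy k H As amax =
     Pi_pmf ({1..k} \<times> {1..H}) undefined
       (\<lambda>(l,i). expl_action (real k / (2 * real H)) (As l i) (amax l i))"

text \<open>Executing a deterministic policy pol from start level st:
  state_dist P st pol j is the distribution of the level occupied at stage j+1.\<close>
fun state_dist :: "(nat \<Rightarrow> nat \<Rightarrow> 'a \<Rightarrow> nat pmf) \<Rightarrow> nat \<Rightarrow> (nat \<times> nat \<Rightarrow> 'a) \<Rightarrow> nat \<Rightarrow> nat pmf" where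
  "state_dist P st pol 0 = return_pmf st"
| "state_dist P st pol (Suc j) =
     state_dist P st pol j \<bind> (\<lambda>l. P (Suc j) l (pol (l, Suc j)))"

text \<open>Q_{l,i}: probability that the random policy eta visits state (l,i), i \<ge> 1.\<close>
definition visit_prob ::
  "nat \<Rightarrow> nat \<Rightarrow> (nat \<Rightarrow> nat \<Rightarrow> 'a set) \<Rightarrow> (nat \<Rightarrow> nat \<Rightarrow> 'a) \<Rightarrow>
   (nat \<Rightarrow> nat \<Rightarrow> 'a \<Rightarrow> nat pmf) \<Rightarrow> nat \<Rightarrow> nat \<Rightarrow> nat \<Rightarrow> real" where
  "visit_prob k H As amax P st l i =
     pmf (expl_policy k H As amax \<bind> (\<lambda>pol. state_dist P st pol (i - 1))) l"

end

theory Submission imports Defs begin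
lemma sd_indep: "(\<And>l' m. 1 \<le> m \<Longrightarrow> m \<le> j \<Longrightarrow> pol (l',m) = pol' (l',m)) \<Longrightarrow>
  state_dist P st pol j = state_dist P st pol' j"
  by (induction j) auto

lemma bind_ge: "ennreal (pmf A l) * ennreal (pmf (B l) s) \<le> ennreal (pmf (A \<bind> B) s)"
proof -
  have "ennreal (pmf A l) * ennreal (pmf (B l) s) = (\<integral>\<^sup>+x. ennreal (pmf (B x) s) * indicator {l} x \<partial>measure_pmf A)"
    by (simp add: nn_integral_cmult_indicator emeasure_pmf_single mult.commute)
  also have "\<dots> \<le> (\<integral>\<^sup>+x. ennreal (pmf (B x) s) \<partial>measure_pmf A)"
    by (intro nn_integral_mono) (auto split: split_indicator)
  finally show ?thesis by (simp add: ennreal_pmf_bind)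
qed

lemma exp_bound: "0 \<le> (x::real) \<Longrightarrow> x \<le> 1 \<Longrightarrow> exp (-x) \<le> 1 - x/2"
proof -
  assume a: "0 \<le> x" "x \<le> 1"
  have "1 + x \<le> exp x" by (rule exp_ge_add_one_self)
  hence "exp (-x) \<le> 1/(1+x)" using a by (simp add: exp_minus field_simps)
  also have "1/(1+x) \<le> 1 - x/2" using a proof -
    have "x*x \<le> x" using a mult_left_le[of x x] by simp
    thus ?thesis using a by (simp add: field_simps)
  qed
  finally show ?thesis .
qed

lemma main:
  fixes k H :: nat and As :: "nat \<Rightarrow> nat \<Rightarrow> 'a set"
    and amax :: "nat \<Rightarrow> nat \<Rightarrow> 'a" and P :: "nat \<Rightarrow> nat \<Rightarrow> 'a \<Rightarrow> nat pmf"
    and st l i s :: nat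
  assumes kH: "k \<le> H" and fin: "finite (As l i)" and ne: "As l i \<noteq> {}"
    and i: "1 \<le> i" "i \<le> H" and l: "1 \<le> l" "l \<le> k"
  defines "q \<equiv> real k / (2 * real H)"
  shows "visit_prob k H As amax P st l i *
      (q * (\<Sum>a\<in>As l i. pmf (P i l a) s) / card (As l i) + (1 - q) * pmf (P i l (amax l i)) s)
    \<le> visit_prob k H As amax P st s (i+1)"
proof -
  define x where "x = (l,i)"
  define D where "D = {1..k} \<times> {1..H}"
  define D' where "D' = D - {x}"
  define act where "act = (\<lambda>(l,i). expl_action (real k / (2 * real H)) (As l i) (amax l i))"
  define Y where "Y = act x"
  define F where "F = Pi_pmf D' undefined act"
  define G where "G = (\<lambda>a. pmf (P i l a) s)"
  define E where "E = q * (\<Sum>a\<in>As l i. G a) / card (As l i) + (1 - q) * G (amax l i)"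
  have q: "0 \<le> q" "q \<le> 1" using kH i unfolding q_def by (auto simp: field_simps)
  have xD: "D = insert x D'" "x \<notin> D'" "finite D'" using i l unfolding D_def D'_def x_def by auto
  have pol: "expl_policy k H As amax = map_pmf (\<lambda>(y,f). f(x:=y)) (pair_pmf Y F)"
    unfolding expl_policy_def act_def[symmetric] Y_def F_def
    by (subst D_def[symmetric], subst xD(1), rule Pi_pmf_insert[OF xD(3,2)])
  have sd_upd: "state_dist P st (f(x:=y)) (i-1) = state_dist P st f (i-1)" for f y
    by (rule sd_indep) (auto simp: x_def)
  have sdi: "state_dist P st g i = state_dist P st g (i-1) \<bind> (\<lambda>l'. P i l' (g (l', i)))" for g
    using i by (cases i) auto
  have EY: "(\<integral>\<^sup>+y. ennreal (G y) \<partial>measure_pmf Y) = ennreal E"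
  proof -
    have "(\<integral>\<^sup>+y. ennreal (G y) \<partial>measure_pmf Y) =
      (\<integral>\<^sup>+b. (\<integral>\<^sup>+y. ennreal (G y) \<partial>measure_pmf (if b then pmf_of_set (As l i) else return_pmf (amax l i))) \<partial>measure_pmf (bernoulli_pmf q))"
      unfolding Y_def act_def x_def expl_action_def q_def by simp
    also have "\<dots> = (\<integral>\<^sup>+y. ennreal (G y) \<partial>measure_pmf (pmf_of_set (As l i))) * q
          + ennreal (G (amax l i)) * (1 - q)"
      using q by (subst nn_integral_bernoulli_pmf) auto
    also have "\<dots> = ennreal E"
    proof -
      have c: "card (As l i) > 0" using fin ne by (simp add: card_gt_0_iff)
      have h1: "(\<integral>\<^sup>+y. ennreal (G y) \<partial>measure_pmf (pmf_of_set (As l i))) = ennreal (sum G (As l i) / card (As l i))"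
        using fin ne c by (simp add: nn_integral_pmf_of_set ennreal_of_nat_eq_real_of_nat divide_ennreal sum_nonneg G_def)
      show ?thesis using q c unfolding h1 E_def
        by (simp add: G_def ennreal_mult''[symmetric] ennreal_plus[symmetric] sum_nonneg mult.commute
           del: ennreal_plus)
    qed
    finally show ?thesis .
  qed
  have QF: "ennreal (visit_prob k H As amax P st l i) = (\<integral>\<^sup>+f. ennreal (pmf (state_dist P st f (i-1)) l) \<partial>measure_pmf F)"
    unfolding visit_prob_def
    by (simp add: ennreal_pmf_bind pol nn_integral_pair_pmf' sd_upd[simplified] measure_pmf.emeasure_space_1)
  have "ennreal (visit_prob k H As amax P st s (i+1)) =
      (\<integral>\<^sup>+y. \<integral>\<^sup>+f. ennreal (pmf (state_dist P st f (i-1) \<bind> (\<lambda>l'. P i l' ((f(x:=y)) (l', i)))) s) \<partial>measure_pmf F \<partial>measure_pmf Y)"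
    unfolding visit_prob_def
    by (simp add: ennreal_pmf_bind pol nn_integral_pair_pmf' sdi sd_upd[simplified])
  also have "\<dots> \<ge> (\<integral>\<^sup>+y. \<integral>\<^sup>+f. ennreal (pmf (state_dist P st f (i-1)) l) * ennreal (G y) \<partial>measure_pmf F \<partial>measure_pmf Y)"
    by (intro nn_integral_mono order_trans[OF _ bind_ge[where l=l]]) (simp add: G_def x_def)
  also have "(\<integral>\<^sup>+y. \<integral>\<^sup>+f. ennreal (pmf (state_dist P st f (i-1)) l) * ennreal (G y) \<partial>measure_pmf F \<partial>measure_pmf Y)
     = ennreal (visit_prob k H As amax P st l i) * ennreal E"
    by (simp add: QF EY[symmetric] nn_integral_multc nn_integral_cmult)
  finally have fin1: "ennreal (visit_prob k H As amax P st l i * E) \<le> ennreal (visit_prob k H As amax P st s (i+1))"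
    using ennreal_mult[of "visit_prob k H As amax P st l i" E] q
    by (simp add: E_def G_def sum_nonneg visit_prob_def)
  have "0 \<le> visit_prob k H As amax P st s (i+1)" by (simp add: visit_prob_def)
  hence "visit_prob k H As amax P st l i * E \<le> visit_prob k H As amax P st s (i+1)"
    using fin1 ennreal_le_iff by blast
  thus ?thesis by (simp add: E_def G_def)
qed
theorem lemma9:
  fixes k H :: nat and Act :: "'a set" and As :: "nat \<Rightarrow> nat \<Rightarrow> 'a set"
    and amax :: "nat \<Rightarrow> nat \<Rightarrow> 'a" and P :: "nat \<Rightarrow> nat \<Rightarrow> 'a \<Rightarrow> nat pmf"
    and st l i :: nat
  defines "p \<equiv> (\<lambda>i s l a. pmf (P i l a) s)"
    and "Q \<equiv> visit_prob k H As amax P st"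
  assumes k_pos: "1 \<le> k" and kH: "k \<le> H"
    and Act_fin: "finite Act"
    and st_range: "st \<in> {1..k}"
    and trans_range: "\<And>i l a. i \<in> {1..<H} \<Longrightarrow> l \<in> {1..k} \<Longrightarrow> a \<in> Act \<Longrightarrow>
                              set_pmf (P i l a) \<subseteq> {1..k}"
    and As_sub: "\<And>l i. l \<in> {1..k} \<Longrightarrow> i \<in> {1..H} \<Longrightarrow> As l i \<subseteq> Act"
    and As_ne: "\<And>l i. l \<in> {1..k} \<Longrightarrow> i \<in> {1..H} \<Longrightarrow> As l i \<noteq> {}"
    and amax_in: "\<And>l i. l \<in> {1..k} \<Longrightarrow> i \<in> {1..H} \<Longrightarrow> amax l i \<in> As l i"
    and amax_max: "\<And>l i a. l \<in> {1..k} \<Longrightarrow> i \<in> {1..H} \<Longrightarrow> a \<in> As l i \<Longrightarrow>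
                             p i l l a \<le> p i l l (amax l i)"
    and i_range: "i \<in> {1..H-1}" and l_range: "l \<in> {1..k}"
  shows "(\<forall>s\<in>{1..k}. s < k \<longrightarrow>
            Q s (i+1) \<ge> (MAX a\<in>As l i. real k / (2 * real H * real (card Act)) * Q l i * p i s l a))
       \<and> Q l (i+1) \<ge> (MAX a\<in>As l i. (1 - real k / (2 * real H)) * Q l i * p i l l a)
       \<and> (MAX a\<in>As l i. (1 - real k / (2 * real H)) * Q l i * p i l l a)
           \<ge> (MAX a\<in>As l i. exp (- real k / real H) * Q l i * p i l l a)"
proof -
  have iH: "1 \<le> i" "i \<le> H" "i < H" using i_range kH k_pos by auto
  have l: "1 \<le> l" "l \<le> k" using l_range by auto
  have lin: "l \<in> {1..k}" "i \<in> {1..H}" using iH l by auto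
  define S where "S = As l i"
  define q where "q = real k / (2 * real H)"
  have Ssub: "S \<subseteq> Act" using As_sub[OF lin] S_def by simp
  have Sfin: "finite S" using Ssub Act_fin finite_subset by blast
  have Sne: "S \<noteq> {}" using As_ne[OF lin] S_def by simp
  have c: "0 < card S" "card S \<le> card Act" using Sfin Sne Ssub Act_fin
    by (auto simp: card_gt_0_iff card_mono)
  have q: "0 \<le> q" "q \<le> 1" using kH iH unfolding q_def by (auto simp: field_simps)
  have Q0: "0 \<le> Q l i" unfolding Q_def visit_prob_def by simp
  have p0: "\<And>s a. 0 \<le> p i s l a" unfolding p_def by simp
  have M: "\<And>s. Q l i * (q * (\<Sum>a\<in>S. p i s l a) / card S + (1 - q) * p i s l (amax l i)) \<le> Q s (i+1)"
    using main[OF kH _ _ iH(1,2) l, of As amax P st] Sfin Sne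
    unfolding Q_def p_def S_def q_def by simp
  have MAXle: "\<And>f B. (\<And>a. a \<in> S \<Longrightarrow> f a \<le> (B::real)) \<Longrightarrow> (MAX a\<in>S. f a) \<le> B"
    using Sfin Sne by (simp add: Max_le_iff)
  have part1: "\<forall>s\<in>{1..k}. s < k \<longrightarrow>
            Q s (i+1) \<ge> (MAX a\<in>As l i. real k / (2 * real H * real (card Act)) * Q l i * p i s l a)"
  proof (intro ballI impI)
    fix s assume "s \<in> {1..k}" "s < k"
    show "Q s (i+1) \<ge> (MAX a\<in>As l i. real k / (2 * real H * real (card Act)) * Q l i * p i s l a)"
      unfolding S_def[symmetric]
    proof (rule MAXle)
      fix a assume a: "a \<in> S"
      have pa: "p i s l a \<le> (\<Sum>a\<in>S. p i s l a)"
        using a Sfin p0 by (intro member_le_sum) auto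
      have cc: "q / card Act \<le> q / card S" using c q
        by (intro divide_left_mono) auto
      have "real k / (2 * real H * real (card Act)) * p i s l a = q / card Act * p i s l a"
        unfolding q_def by simp
      also have "\<dots> \<le> q / card S * (\<Sum>a\<in>S. p i s l a)"
        using cc pa p0 q c by (intro mult_mono) auto
      also have "\<dots> \<le> q * (\<Sum>a\<in>S. p i s l a) / card S + (1 - q) * p i s l (amax l i)"
        using q p0 by simp
      finally have "real k / (2 * real H * real (card Act)) * p i s l a \<le>
          q * (\<Sum>a\<in>S. p i s l a) / card S + (1 - q) * p i s l (amax l i)" .
      hence "Q l i * (real k / (2 * real H * real (card Act)) * p i s l a) \<le>
          Q l i * (q * (\<Sum>a\<in>S. p i s l a) / card S + (1 - q) * p i s l (amax l i))"
        using Q0 by (intro mult_left_mono)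
      thus "real k / (2 * real H * real (card Act)) * Q l i * p i s l a \<le> Q s (i + 1)"
        using M[of s] by (simp add: mult_ac)
    qed
  qed
  have part2: "Q l (i+1) \<ge> (MAX a\<in>As l i. (1 - real k / (2 * real H)) * Q l i * p i l l a)"
    unfolding S_def[symmetric] q_def[symmetric]
  proof (rule MAXle)
    fix a assume a: "a \<in> S"
    have "p i l l a \<le> p i l l (amax l i)" using amax_max[OF lin] a S_def by simp
    hence "(1 - q) * p i l l a \<le> (1 - q) * p i l l (amax l i)" using q by (intro mult_left_mono) auto
    also have "\<dots> \<le> q * (\<Sum>a\<in>S. p i l l a) / card S + (1 - q) * p i l l (amax l i)"
      using q p0 by (simp add: sum_nonneg)
    finally have "Q l i * ((1 - q) * p i l l a) \<le> Q l i * (q * (\<Sum>a\<in>S. p i l l a) / card S + (1 - q) * p i l l (amax l i))"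
      using Q0 by (intro mult_left_mono)
    thus "(1 - q) * Q l i * p i l l a \<le> Q l (i + 1)" using M[of l] by (simp add: mult_ac)
  qed
  have part3: "(MAX a\<in>As l i. (1 - real k / (2 * real H)) * Q l i * p i l l a)
           \<ge> (MAX a\<in>As l i. exp (- real k / real H) * Q l i * p i l l a)"
    unfolding S_def[symmetric] q_def[symmetric]
  proof (rule MAXle)
    fix a assume a: "a \<in> S"
    have "exp (- (real k / real H)) \<le> 1 - (real k / real H) / 2"
      using kH iH by (intro exp_bound) auto
    hence e: "exp (- real k / real H) \<le> 1 - q" unfolding q_def by simp
    have "exp (- real k / real H) * Q l i * p i l l a \<le> (1 - q) * Q l i * p i l l a"
      using e Q0 p0[of l a] by (intro mult_right_mono) auto
    also have "\<dots> \<le> (MAX a\<in>S. (1 - q) * Q l i * p i l l a)"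
      using a Sfin by (intro Max_ge) auto
    finally show "exp (- real k / real H) * Q l i * p i l l a \<le> (MAX a\<in>S. (1 - q) * Q l i * p i l l a)" .
  qed
  show ?thesis using part1 part2 part3 by blast
qed

end
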